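(* The attention-weighted rank fairness metric $AWRF$ does not satisfy deepness; that is, there exist a population $\mathcal D$, a candidate set $D\subseteq\mathcal D$, a ranking $r$ of $D$ and positions $i<j$ with $y(r(i))=y(r(j))$, $y(r(i+1))=y(r(j+1))$, and either ($r(i),r(j)\in G_0$ and $r(i+1),r(j+1)\in G_1$) or ($r(i),r(j)\in G_1$ and $r(i+1),r(j+1)\in G_0$), such that $|AWRF(r)-AWRF(r_{i\leftrightarrow i+1})|\le|AWRF(r)-AWRF(r_{j\leftrightarrow j+1})|$.
   Context: A population is a finite set $\mathcal{D}$ of candidates partitioned into two nonempty groups, a non-protected group $G_0$ and a protected group $G_1$; each candidate $d$ has a relevance score $y(d)\in\mathbb R$. Let $p_G=|G|/|\mathcal D|$ and $p_{\mathrm{groups}}=(p_{G_0},p_{G_1})$. For a candidate set $D\subseteq\mathcal D$ with $n=|D|$, a ranking is a bijection $r:\{1,\dots,n\}\to D$ and $r^{-1}(d)$ is the position of $d$; $r_{i\leftrightarrow j}$ is $r$ with the candidates at positions $i,j$ swapped. Position bias $b(k)=1/\log_2(k+1)$. $AWRF$: let $p_{\mathrm{Exp}}(r)=\frac{1}{\sum_{k=1}^n b(k)}\left(\sum_{d\in G_0\cap D} b(r^{-1}(d)),\ \sum_{d\in G_1\cap D} b(r^{-1}(d))\right)$, $p_{\mathrm{sum}}(r)=\frac12(p_{\mathrm{Exp}}(r)+p_{\mathrm{groups}})$, $\Delta_{KL}(p\|q)=\sum_i p_i\log_2(p_i/q_i)$ (with $0\log 0=0$), and $AWRF(r)=1-\left[\frac12\Delta_{KL}(p_{\mathrm{Exp}}(r)\|p_{\mathrm{sum}}(r))+\frac12\Delta_{KL}(p_{\mathrm{groups}}\|p_{\mathrm{sum}}(r))\right]$.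 *)

theory Defs
  imports Complex_Main
begin

text \<open>A population is a finite set
  Pop of candidates together with its protected group G1 (a subset of Pop);
  the non-protected group is G0 = Pop - G1. Positions are 1..n.\<close>

definition pos_bias :: "nat \<Rightarrow> real" where
  "pos_bias k = 1 / log 2 (real k + 1)"

definition is_population :: "nat set \<Rightarrow> nat set \<Rightarrow> bool" where
  "is_population Pop G1 \<longleftrightarrow> finite Pop \<and> G1 \<subseteq> Pop \<and> G1 \<noteq> {} \<and> Pop - G1 \<noteq> {}"

definition is_ranking :: "nat set \<Rightarrow> (nat \<Rightarrow> nat) \<Rightarrow> bool" where
  "is_ranking D r \<longleftrightarrow> bij_betw r {1..card D} D"

definition swap_pos :: "(nat \<Rightarrow> nat) \<Rightarrow> nat \<Rightarrow> nat \<Rightarrow> (nat \<Rightarrow> nat)" where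
  "swap_pos r i j = r(i := r j, j := r i)"

definition p_groups :: "nat set \<Rightarrow> nat set \<Rightarrow> real \<times> real" where
  "p_groups Pop G1 = (real (card (Pop - G1)) / real (card Pop), real (card G1) / real (card Pop))"

text \<open>Exposure distribution of a ranking r of a candidate set of size n
  (sums over positions k, equivalently over candidates d with k = r^-1(d)).\<close>
definition p_exp :: "nat set \<Rightarrow> nat set \<Rightarrow> nat \<Rightarrow> (nat \<Rightarrow> nat) \<Rightarrow> real \<times> real" where
  "p_exp Pop G1 n r =
     (let Z = (\<Sum>k=1..n. pos_bias k) in
      ((\<Sum>k\<in>{k\<in>{1..n}. r k \<in> Pop - G1}. pos_bias k) / Z,
       (\<Sum>k\<in>{k\<in>{1..n}. r k \<in> G1}. pos_bias k) / Z))"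

definition kl_term :: "real \<Rightarrow> real \<Rightarrow> real" where
  "kl_term p q = (if p = 0 then 0 else p * log 2 (p / q))"

definition kl2 :: "real \<times> real \<Rightarrow> real \<times> real \<Rightarrow> real" where
  "kl2 p q = kl_term (fst p) (fst q) + kl_term (snd p) (snd q)"

definition AWRF :: "nat set \<Rightarrow> nat set \<Rightarrow> nat \<Rightarrow> (nat \<Rightarrow> nat) \<Rightarrow> real" where
  "AWRF Pop G1 n r =
     (let pe = p_exp Pop G1 n r; pg = p_groups Pop G1;
          ps = ((fst pe + fst pg) / 2, (snd pe + snd pg) / 2)
      in 1 - (kl2 pe ps / 2 + kl2 pg ps / 2))"

end

theory Submission
  imports Defs
begin

lemma setA: "{k\<in>{1..4::nat}. swap_pos id 1 2 k \<in> {1,2,3,4::nat} - {2,4}} = {2,3}"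
  by (auto simp: swap_pos_def)
lemma setB: "{k\<in>{1..4::nat}. swap_pos id 1 2 k \<in> {2,4::nat}} = {1,4}"
  by (auto simp: swap_pos_def)
lemma setC: "{k\<in>{1..4::nat}. swap_pos id 3 4 k \<in> {1,2,3,4::nat} - {2,4}} = {1,4}"
  by (auto simp: swap_pos_def)
lemma setD: "{k\<in>{1..4::nat}. swap_pos id 3 4 k \<in> {2,4::nat}} = {2,3}"
  by (auto simp: swap_pos_def)

lemma pg: "p_groups {1,2,3,4} {2,4} = (1/2, 1/2)"
  unfolding p_groups_def
  by (simp add: insert_Diff_if)

lemma eqAWRF: "AWRF {1,2,3,4} {2,4} 4 (swap_pos id 1 2) = AWRF {1,2,3,4} {2,4} 4 (swap_pos id 3 4)"
  unfolding AWRF_def p_exp_def Let_def pg kl2_def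
  by (simp only: setA setB setC setD fst_conv snd_conv) (simp add: algebra_simps)

theorem theorem9:
  shows "\<exists>(Pop::nat set) G1 (y::nat \<Rightarrow> real) D r i j.
     is_population Pop G1 \<and> D \<subseteq> Pop \<and> is_ranking D r \<and>
     1 \<le> i \<and> i < j \<and> j + 1 \<le> card D \<and>
     y (r i) = y (r j) \<and> y (r (i+1)) = y (r (j+1)) \<and>
     ((r i \<in> Pop - G1 \<and> r j \<in> Pop - G1 \<and> r (i+1) \<in> G1 \<and> r (j+1) \<in> G1) \<or>
      (r i \<in> G1 \<and> r j \<in> G1 \<and> r (i+1) \<in> Pop - G1 \<and> r (j+1) \<in> Pop - G1)) \<and>
     \<bar>AWRF Pop G1 (card D) r - AWRF Pop G1 (card D) (swap_pos r i (i+1))\<bar>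
       \<le> \<bar>AWRF Pop G1 (card D) r - AWRF Pop G1 (card D) (swap_pos r j (j+1))\<bar>"
proof -
  have c: "card {1,2,3,4::nat} = 4" by simp
  have e: "{1,2,3,4::nat} = {1..4}" by auto
  have pop: "is_population {1,2,3,4} {2,4::nat}" unfolding is_population_def by auto
  have rk: "is_ranking {1,2,3,4} (id::nat\<Rightarrow>nat)" unfolding is_ranking_def c e by simp
  show ?thesis
    apply (rule exI[of _ "{1,2,3,4}"], rule exI[of _ "{2,4}"], rule exI[of _ "\<lambda>_. 0"],
           rule exI[of _ "{1,2,3,4}"], rule exI[of _ id], rule exI[of _ 1], rule exI[of _ 3])
    using pop rk eqAWRF by (simp only: c) (simp add: numeral_2_eq_2)
qed

end
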